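(* Let $\Gamma$ be a finite connected graph with vertex set $V$, and let $Y\subset Z\subset V$ with $Z\neq\emptyset$. Let $s:V\to\mathbb{Z}_{\ge0}$. Let $H_w(s,Y)$ be the expected number of particles stopping in $Y$ when $s(x)$ particles start at each vertex $x$ and perform independent simple random walks on $\Gamma$, each stopped on first hitting $Z$. Let $H_r(s,Y)$ be the number of particles stopping in $Y$ when $s(x)$ particles start at each vertex $x$ and perform rotor-router walks on $\Gamma$, each stopped on first hitting $Z$ (particles moved one step at a time in any order until all lie in $Z$). Let $H(x)=H_w(\mathbf{1}_{x},Y)$ be the probability that simple random walk from $x$ stopped on hitting $Z$ stops in $Y$. Then \[ |H_r(s,Y)-H_w(s,Y)|\le\sum_{u\in V\setminus Z}\ \sum_{v\sim u}|H(u)-H(v)|, \] regardless of $s$, of the initial rotor configuration, and of the order of moves.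
   Context: Rotor-router walk on a graph: each vertex $u$ has a fixed cyclic ordering of its neighbors and a rotor pointing to one of them (initial positions arbitrary). A particle at $u$ (with $u\notin Z$) advances the rotor at $u$ to the next neighbor in the cyclic order and moves to that neighbor. Particles at vertices of $Z$ do not move. Simple random walk moves from $u$ to a uniformly random neighbor. $\mathbf{1}_x$ is the indicator function of $\{x\}$. *)

theory Defs
  imports Complex_Main
begin

definition nbrs :: "('a \<Rightarrow> 'a \<Rightarrow> bool) \<Rightarrow> 'a \<Rightarrow> 'a set" where
  "nbrs adj u = {v. adj u v}"

definition finite_connected_graph :: "('a::finite \<Rightarrow> 'a \<Rightarrow> bool) \<Rightarrow> bool" where
  "finite_connected_graph adj \<longleftrightarrow>
     (\<forall>x y. adj x y \<longrightarrow> adj y x) \<and> (\<forall>x. \<not> adj x x) \<and> (\<forall>x y. adj\<^sup>*\<^sup>* x y)"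

text \<open>nxt u is a cyclic ordering of the neighbours of u: a map of N(u) into itself
  under which every neighbour is reached from every other one (a single cycle).\<close>
definition cyclic_orders :: "('a \<Rightarrow> 'a \<Rightarrow> bool) \<Rightarrow> ('a \<Rightarrow> 'a \<Rightarrow> 'a) \<Rightarrow> bool" where
  "cyclic_orders adj nxt \<longleftrightarrow>
     (\<forall>u. \<forall>v \<in> nbrs adj u. nxt u v \<in> nbrs adj u \<and>
          (\<forall>w \<in> nbrs adj u. \<exists>k. (nxt u ^^ k) v = w))"

text \<open>Probability that simple random walk started at x, stopped on first hitting Z,
  has stopped in Y within n steps.\<close>
fun hit_within :: "('a::finite \<Rightarrow> 'a \<Rightarrow> bool) \<Rightarrow> 'a set \<Rightarrow> 'a set \<Rightarrow> nat \<Rightarrow> 'a \<Rightarrow> real" where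
  "hit_within adj Z Y 0 x = (if x \<in> Y then 1 else 0)"
| "hit_within adj Z Y (Suc n) x =
     (if x \<in> Z then (if x \<in> Y then 1 else 0)
      else (\<Sum>v\<in>nbrs adj x. hit_within adj Z Y n v) / real (card (nbrs adj x)))"

text \<open>H(x): probability that SRW from x stopped on hitting Z stops in Y
  (increasing limit of the finite-horizon probabilities).\<close>
definition hit_prob :: "('a::finite \<Rightarrow> 'a \<Rightarrow> bool) \<Rightarrow> 'a set \<Rightarrow> 'a set \<Rightarrow> 'a \<Rightarrow> real" where
  "hit_prob adj Z Y x = (SUP n. hit_within adj Z Y n x)"

text \<open>H_w(s,Y): expected number of particles stopping in Y (by linearity of expectation).\<close>
definition H_walk :: "('a::finite \<Rightarrow> 'a \<Rightarrow> bool) \<Rightarrow> 'a set \<Rightarrow> ('a \<Rightarrow> nat) \<Rightarrow> 'a set \<Rightarrow> real" where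
  "H_walk adj Z s Y = (\<Sum>x\<in>UNIV. real (s x) * hit_prob adj Z Y x)"

text \<open>One rotor-router move: a particle at u \<notin> Z advances the rotor at u and moves there.
  A configuration is (rotor, particle counts).\<close>
definition rotor_step ::
  "('a \<Rightarrow> 'a \<Rightarrow> 'a) \<Rightarrow> 'a set \<Rightarrow> ('a \<Rightarrow> 'a) \<times> ('a \<Rightarrow> nat) \<Rightarrow> ('a \<Rightarrow> 'a) \<times> ('a \<Rightarrow> nat) \<Rightarrow> bool" where
  "rotor_step nxt Z c c' \<longleftrightarrow>
     (\<exists>u. u \<notin> Z \<and> snd c u > 0 \<and>
        (let w = nxt u (fst c u); \<sigma>1 = (snd c)(u := snd c u - 1) in
         c' = ((fst c)(u := w), \<sigma>1(w := \<sigma>1 w + 1))))"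

end

theory Submission
  imports Defs
begin

lemma sum_lessThan_add_split:
  "(\<Sum>i<k + n. h i) = (\<Sum>i<k. h i) + (\<Sum>i<n. h (k + i))" for h :: "nat \<Rightarrow> real"
  by (induction n) (simp_all add: add.assoc)

lemma orbit_in:
  assumes "cyclic_orders adj nxt" "b \<in> nbrs adj u"
  shows "(nxt u ^^ i) b \<in> nbrs adj u"
  using assms by (induction i) (auto simp: cyclic_orders_def)

lemma orbit_bij:
  fixes adj :: "'a::finite \<Rightarrow> 'a \<Rightarrow> bool"
  assumes cyc: "cyclic_orders adj nxt" and b: "b \<in> nbrs adj u"
  shows "bij_betw (\<lambda>i. (nxt u ^^ i) b) {..<card (nbrs adj u)} (nbrs adj u)"
proof -
  define f where "f = nxt u"
  define N where "N = nbrs adj u"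
  define p where "p = card N"
  have inN: "\<And>i. (f ^^ i) b \<in> N" using orbit_in[OF cyc b] f_def N_def by simp
  have fin: "finite N" by simp
  have ninj: "\<not> inj_on (\<lambda>i. (f ^^ i) b) {..p}"
  proof
    assume "inj_on (\<lambda>i. (f ^^ i) b) {..p}"
    then have "card {..p} \<le> card N"
      using card_inj_on_le[of "\<lambda>i. (f ^^ i) b" "{..p}" N] inN fin by auto
    then show False using p_def by simp
  qed
  then obtain i j where ij: "i < j" "j \<le> p" "(f ^^ i) b = (f ^^ j) b"
    unfolding inj_on_def by (metis atMost_iff linorder_neqE_nat)
  have all: "\<exists>l<j. (f ^^ k) b = (f ^^ l) b" for k
  proof (induction k rule: less_induct)
    case (less k)
    show ?case
    proof (cases "k < j")
      case True then show ?thesis by blast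
    next
      case False
      then have "k - j + i < k" using ij by simp
      from less[OF this] obtain l where l: "l < j" "(f ^^ (k - j + i)) b = (f ^^ l) b" by blast
      have kk: "k = (k - j) + j" using False by simp
      have "(f ^^ k) b = (f ^^ ((k - j) + j)) b" using kk by simp
      also have "\<dots> = (f ^^ (k - j)) ((f ^^ j) b)" by (simp add: funpow_add)
      finally have "(f ^^ k) b = (f ^^ (k - j)) ((f ^^ j) b)" .
      also have "\<dots> = (f ^^ (k - j)) ((f ^^ i) b)" using ij by simp
      also have "\<dots> = (f ^^ (k - j + i)) b" by (simp add: funpow_add)
      finally show ?thesis using l by auto
    qed
  qed
  have img: "(\<lambda>i. (f ^^ i) b) ` {..<p} = N"
  proof
    show "(\<lambda>i. (f ^^ i) b) ` {..<p} \<subseteq> N" using inN by auto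
    show "N \<subseteq> (\<lambda>i. (f ^^ i) b) ` {..<p}"
    proof
      fix w assume "w \<in> N"
      then obtain k where "(f ^^ k) b = w" using cyc b unfolding cyclic_orders_def f_def N_def by blast
      then obtain l where "l < j" "w = (f ^^ l) b" using all by metis
      then show "w \<in> (\<lambda>i. (f ^^ i) b) ` {..<p}" using ij by auto
    qed
  qed
  have "inj_on (\<lambda>i. (f ^^ i) b) {..<p}"
    by (rule eq_card_imp_inj_on) (use img p_def in simp_all)
  then show ?thesis using img unfolding bij_betw_def f_def N_def p_def by simp
qed

lemma partial_bound:
  fixes adj :: "'a::finite \<Rightarrow> 'a \<Rightarrow> bool" and g :: "'a \<Rightarrow> real"
  assumes cyc: "cyclic_orders adj nxt" and b: "b \<in> nbrs adj u"
    and g0: "(\<Sum>v\<in>nbrs adj u. g v) = 0"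
  shows "\<bar>\<Sum>i<m. g ((nxt u ^^ i) b)\<bar> \<le> (\<Sum>v\<in>nbrs adj u. \<bar>g v\<bar>)"
  using b
proof (induction m arbitrary: b rule: less_induct)
  case (less m)
  define p where "p = card (nbrs adj u)"
  have blk: "(\<Sum>i<p. g ((nxt u ^^ i) c)) = 0" if "c \<in> nbrs adj u" for c
    using sum.reindex_bij_betw[OF orbit_bij[OF cyc that], of g] g0 p_def by simp
  show ?case
  proof (cases "m \<le> p")
    case True
    have "\<bar>\<Sum>i<m. g ((nxt u ^^ i) b)\<bar> \<le> (\<Sum>i<m. \<bar>g ((nxt u ^^ i) b)\<bar>)" by (rule sum_abs)
    also have "\<dots> \<le> (\<Sum>i<p. \<bar>g ((nxt u ^^ i) b)\<bar>)"
      by (rule sum_mono2) (use True in auto)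
    also have "\<dots> = (\<Sum>v\<in>nbrs adj u. \<bar>g v\<bar>)"
      using sum.reindex_bij_betw[OF orbit_bij[OF cyc less.prems], of "\<lambda>v. \<bar>g v\<bar>"] p_def by simp
    finally show ?thesis .
  next
    case False
    have pos: "0 < p" using less.prems p_def card_gt_0_iff by fastforce
    have m: "m = p + (m - p)" using False by simp
    have "(\<Sum>i<m. g ((nxt u ^^ i) b)) = (\<Sum>i<p. g ((nxt u ^^ i) b)) + (\<Sum>i<m - p. g ((nxt u ^^ (p + i)) b))"
      by (subst m, rule sum_lessThan_add_split)
    also have "(\<Sum>i<m - p. g ((nxt u ^^ (p + i)) b)) = (\<Sum>i<m - p. g ((nxt u ^^ i) ((nxt u ^^ p) b)))"
      by (simp add: funpow_add add.commute)
    finally have eq: "(\<Sum>i<m. g ((nxt u ^^ i) b)) = (\<Sum>i<m - p. g ((nxt u ^^ i) ((nxt u ^^ p) b)))"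
      using blk[OF less.prems] by simp
    have "m - p < m" using pos False by simp
    from less.IH[OF this orbit_in[OF cyc less.prems]] show ?thesis by (simp add: eq)
  qed
qed


lemma hw_Z: "x \<in> Z \<Longrightarrow> hit_within adj Z Y n x = (if x \<in> Y then 1 else 0)"
  by (cases n) auto

lemma hw_bounds: "0 \<le> hit_within adj Z Y n x \<and> hit_within adj Z Y n x \<le> 1"
  for adj :: "'a::finite \<Rightarrow> 'a \<Rightarrow> bool"
proof (induction n arbitrary: x)
  case 0 then show ?case by simp
next
  case (Suc n)
  show ?case
  proof (cases "x \<in> Z")
    case False
    have s0: "0 \<le> (\<Sum>v\<in>nbrs adj x. hit_within adj Z Y n v)"
      using Suc by (intro sum_nonneg) auto
    have s1: "(\<Sum>v\<in>nbrs adj x. hit_within adj Z Y n v) \<le> real (card (nbrs adj x))"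
      using sum_mono[of "nbrs adj x" "\<lambda>v. hit_within adj Z Y n v" "\<lambda>_. 1"] Suc by auto
    show ?thesis
    proof (cases "card (nbrs adj x) = 0")
      case True then show ?thesis using False by simp
    next
      case c: False
      then have "0 < real (card (nbrs adj x))" by (metis of_nat_0_less_iff neq0_conv)
      then show ?thesis using False s0 s1 by (simp add: divide_le_eq_1)
    qed
  qed simp
qed

lemma hw_mono:
  fixes adj :: "'a::finite \<Rightarrow> 'a \<Rightarrow> bool"
  assumes YZ: "Y \<subseteq> Z"
  shows "hit_within adj Z Y n x \<le> hit_within adj Z Y (Suc n) x"
proof (induction n arbitrary: x)
  case 0
  show ?case
  proof (cases "x \<in> Z")
    case False
    then have "x \<notin> Y" using YZ by auto
    then show ?thesis using hw_bounds[of adj Z Y "Suc 0" x] by simp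
  qed simp
next
  case (Suc n)
  show ?case
  proof (cases "x \<in> Z")
    case False
    have "(\<Sum>v\<in>nbrs adj x. hit_within adj Z Y n v) \<le> (\<Sum>v\<in>nbrs adj x. hit_within adj Z Y (Suc n) v)"
      by (rule sum_mono) (rule Suc)
    then have "(\<Sum>v\<in>nbrs adj x. hit_within adj Z Y n v) / real (card (nbrs adj x)) \<le>
       (\<Sum>v\<in>nbrs adj x. hit_within adj Z Y (Suc n) v) / real (card (nbrs adj x))"
      by (rule divide_right_mono) simp
    then show ?thesis using False by simp
  qed simp
qed

lemma hw_lim:
  fixes adj :: "'a::finite \<Rightarrow> 'a \<Rightarrow> bool"
  assumes YZ: "Y \<subseteq> Z"
  shows "(\<lambda>n. hit_within adj Z Y n x) \<longlonglongrightarrow> hit_prob adj Z Y x"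
  unfolding hit_prob_def
proof (rule LIMSEQ_incseq_SUP)
  show "bdd_above (range (\<lambda>n. hit_within adj Z Y n x))"
    using hw_bounds by (intro bdd_aboveI[of _ 1]) blast
  show "incseq (\<lambda>n. hit_within adj Z Y n x)"
    by (rule incseq_SucI) (rule hw_mono[OF YZ])
qed

lemma H_Z:
  fixes adj :: "'a::finite \<Rightarrow> 'a \<Rightarrow> bool"
  assumes "x \<in> Z"
  shows "hit_prob adj Z Y x = (if x \<in> Y then 1 else 0)"
  unfolding hit_prob_def using hw_Z[OF assms] by simp

lemma H_harm:
  fixes adj :: "'a::finite \<Rightarrow> 'a \<Rightarrow> bool"
  assumes YZ: "Y \<subseteq> Z" and x: "x \<notin> Z"
  shows "hit_prob adj Z Y x = (\<Sum>v\<in>nbrs adj x. hit_prob adj Z Y v) / real (card (nbrs adj x))"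
proof -
  have a: "(\<lambda>n. hit_within adj Z Y (Suc n) x) \<longlonglongrightarrow> hit_prob adj Z Y x"
    using hw_lim[OF YZ] by (rule LIMSEQ_Suc)
  have b: "(\<lambda>n. hit_within adj Z Y (Suc n) x) \<longlonglongrightarrow>
       (\<Sum>v\<in>nbrs adj x. hit_prob adj Z Y v) / real (card (nbrs adj x))"
    using x unfolding hit_within.simps(2) divide_inverse
    by (simp only: if_False) (intro tendsto_mult_right tendsto_sum hw_lim[OF YZ])
  show ?thesis using LIMSEQ_unique[OF a b] .
qed


definition Tsum :: "('a \<Rightarrow> 'a \<Rightarrow> 'a) \<Rightarrow> ('a \<Rightarrow> real) \<Rightarrow> ('a \<Rightarrow> 'a) \<Rightarrow> 'a \<Rightarrow> nat \<Rightarrow> real" where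
  "Tsum nxt H \<rho>0 u m = (\<Sum>i<m. H ((nxt u ^^ i) (nxt u (\<rho>0 u))) - H u)"

lemma sum_upd_inc:
  fixes h :: "'a::finite \<Rightarrow> nat" and H :: "'a \<Rightarrow> real"
  shows "(\<Sum>x\<in>UNIV. real ((h(a := h a + 1)) x) * H x) = (\<Sum>x\<in>UNIV. real (h x) * H x) + H a"
proof -
  have "(\<Sum>x\<in>UNIV. real ((h(a := h a + 1)) x) * H x)
      = real ((h(a := h a + 1)) a) * H a + (\<Sum>x\<in>UNIV - {a}. real ((h(a := h a + 1)) x) * H x)"
    by (rule sum.remove) auto
  also have "(\<Sum>x\<in>UNIV - {a}. real ((h(a := h a + 1)) x) * H x) = (\<Sum>x\<in>UNIV - {a}. real (h x) * H x)"
    by (rule sum.cong) auto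
  also have "(\<Sum>x\<in>UNIV. real (h x) * H x) = real (h a) * H a + (\<Sum>x\<in>UNIV - {a}. real (h x) * H x)"
    by (rule sum.remove) auto
  ultimately show ?thesis by (simp add: algebra_simps)
qed

lemma sum_upd_dec:
  fixes h :: "'a::finite \<Rightarrow> nat" and H :: "'a \<Rightarrow> real"
  assumes "h a > 0"
  shows "(\<Sum>x\<in>UNIV. real ((h(a := h a - 1)) x) * H x) = (\<Sum>x\<in>UNIV. real (h x) * H x) - H a"
proof -
  have "(\<Sum>x\<in>UNIV. real ((h(a := h a - 1)) x) * H x)
      = real ((h(a := h a - 1)) a) * H a + (\<Sum>x\<in>UNIV - {a}. real ((h(a := h a - 1)) x) * H x)"
    by (rule sum.remove) auto
  also have "(\<Sum>x\<in>UNIV - {a}. real ((h(a := h a - 1)) x) * H x) = (\<Sum>x\<in>UNIV - {a}. real (h x) * H x)"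
    by (rule sum.cong) auto
  also have "(\<Sum>x\<in>UNIV. real (h x) * H x) = real (h a) * H a + (\<Sum>x\<in>UNIV - {a}. real (h x) * H x)"
    by (rule sum.remove) auto
  ultimately show ?thesis using assms by (simp add: of_nat_diff algebra_simps)
qed

lemma Tsum_upd:
  fixes Z :: "'a::finite set"
  assumes u: "u \<notin> Z"
  shows "(\<Sum>v\<in>UNIV - Z. Tsum nxt H \<rho>0 v ((m(u := Suc (m u))) v))
       = (\<Sum>v\<in>UNIV - Z. Tsum nxt H \<rho>0 v (m v)) + (H ((nxt u ^^ m u) (nxt u (\<rho>0 u))) - H u)"
proof -
  have "(\<Sum>v\<in>UNIV - Z. Tsum nxt H \<rho>0 v ((m(u := Suc (m u))) v))
     = Tsum nxt H \<rho>0 u ((m(u := Suc (m u))) u) + (\<Sum>v\<in>UNIV - Z - {u}. Tsum nxt H \<rho>0 v ((m(u := Suc (m u))) v))"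
    by (rule sum.remove) (use u in auto)
  also have "(\<Sum>v\<in>UNIV - Z - {u}. Tsum nxt H \<rho>0 v ((m(u := Suc (m u))) v))
      = (\<Sum>v\<in>UNIV - Z - {u}. Tsum nxt H \<rho>0 v (m v))"
    by (rule sum.cong) auto
  also have "(\<Sum>v\<in>UNIV - Z. Tsum nxt H \<rho>0 v (m v)) = Tsum nxt H \<rho>0 u (m u) + (\<Sum>v\<in>UNIV - Z - {u}. Tsum nxt H \<rho>0 v (m v))"
    by (rule sum.remove) (use u in auto)
  ultimately show ?thesis by (simp add: Tsum_def)
qed

lemma invariant:
  fixes H :: "'a::finite \<Rightarrow> real"
  assumes "(rotor_step nxt Z)\<^sup>*\<^sup>* (\<rho>0, s) c"
  shows "\<exists>m. (\<forall>u. u \<notin> Z \<longrightarrow> fst c u = (nxt u ^^ m u) (\<rho>0 u)) \<and>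
     (\<Sum>x\<in>UNIV. real (snd c x) * H x) = (\<Sum>x\<in>UNIV. real (s x) * H x) + (\<Sum>u\<in>UNIV - Z. Tsum nxt H \<rho>0 u (m u))"
  using assms
proof (induction rule: rtranclp_induct)
  case base
  show ?case by (intro exI[of _ "\<lambda>_. 0"]) (simp add: Tsum_def)
next
  case (step c c')
  obtain m where m: "\<forall>u. u \<notin> Z \<longrightarrow> fst c u = (nxt u ^^ m u) (\<rho>0 u)"
    and ms: "(\<Sum>x\<in>UNIV. real (snd c x) * H x) = (\<Sum>x\<in>UNIV. real (s x) * H x) + (\<Sum>u\<in>UNIV - Z. Tsum nxt H \<rho>0 u (m u))"
    using step.IH by blast
  obtain \<rho> \<sigma> where c: "c = (\<rho>, \<sigma>)" by (cases c)
  from step.hyps(2) obtain u where u: "u \<notin> Z" "\<sigma> u > 0" and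
    c': "c' = (\<rho>(u := nxt u (\<rho> u)), (\<sigma>(u := \<sigma> u - 1))(nxt u (\<rho> u) := (\<sigma>(u := \<sigma> u - 1)) (nxt u (\<rho> u)) + 1))"
    unfolding rotor_step_def c Let_def by auto
  define w where "w = nxt u (\<rho> u)"
  have wm: "w = (nxt u ^^ m u) (nxt u (\<rho>0 u))"
    using m u c by (simp add: w_def funpow_swap1)
  define m' where "m' = m(u := Suc (m u))"
  show ?case
  proof (intro exI[of _ m'] conjI allI impI)
    fix v assume v: "v \<notin> Z"
    show "fst c' v = (nxt v ^^ m' v) (\<rho>0 v)"
    proof (cases "v = u")
      case True then show ?thesis using c' m c u m'_def by simp
    next
      case False then show ?thesis using c' m c v m'_def by simp
    qed
  next
    have "(\<Sum>x\<in>UNIV. real (snd c' x) * H x) = (\<Sum>x\<in>UNIV. real ((\<sigma>(u := \<sigma> u - 1)) x) * H x) + H w"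
      unfolding c' w_def snd_conv by (rule sum_upd_inc)
    also have "(\<Sum>x\<in>UNIV. real ((\<sigma>(u := \<sigma> u - 1)) x) * H x) = (\<Sum>x\<in>UNIV. real (\<sigma> x) * H x) - H u"
      by (rule sum_upd_dec) (rule u(2))
    finally show "(\<Sum>x\<in>UNIV. real (snd c' x) * H x) = (\<Sum>x\<in>UNIV. real (s x) * H x) + (\<Sum>u\<in>UNIV - Z. Tsum nxt H \<rho>0 u (m' u))"
      using ms c Tsum_upd[OF u(1), of nxt H \<rho>0 m] wm unfolding m'_def by simp
  qed
qed


theorem proposition5p7:
  fixes adj :: "'a::finite \<Rightarrow> 'a \<Rightarrow> bool"
    and nxt :: "'a \<Rightarrow> 'a \<Rightarrow> 'a"
    and Y Z :: "'a set"
    and s :: "'a \<Rightarrow> nat"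
    and \<rho>0 \<rho>' :: "'a \<Rightarrow> 'a"
    and \<sigma>' :: "'a \<Rightarrow> nat"
  assumes "finite_connected_graph adj"
    and "Y \<subseteq> Z" and "Z \<noteq> {}"
    and "cyclic_orders adj nxt"
    and "\<forall>u. nbrs adj u \<noteq> {} \<longrightarrow> \<rho>0 u \<in> nbrs adj u"
    and "(rotor_step nxt Z)\<^sup>*\<^sup>* (\<rho>0, s) (\<rho>', \<sigma>')"
    and "\<forall>x. x \<notin> Z \<longrightarrow> \<sigma>' x = 0"
  shows "\<bar>real (\<Sum>y\<in>Y. \<sigma>' y) - H_walk adj Z s Y\<bar>
           \<le> (\<Sum>u\<in>UNIV - Z. \<Sum>v\<in>nbrs adj u.
                 \<bar>hit_prob adj Z Y u - hit_prob adj Z Y v\<bar>)"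
proof -
  note conn = assms(1) and YZ = assms(2) and Zne = assms(3) and cyc = assms(4)
    and rho0 = assms(5) and run = assms(6) and fin0 = assms(7)
  define H where "H = hit_prob adj Z Y"
  obtain m where
    ms: "(\<Sum>x\<in>UNIV. real (\<sigma>' x) * H x) = (\<Sum>x\<in>UNIV. real (s x) * H x) + (\<Sum>u\<in>UNIV - Z. Tsum nxt H \<rho>0 u (m u))"
    using invariant[OF run, of H] by auto
  have "(\<Sum>x\<in>UNIV. real (\<sigma>' x) * H x) = (\<Sum>x\<in>UNIV. if x \<in> Y then real (\<sigma>' x) else 0)"
  proof (rule sum.cong)
    fix x :: 'a
    show "real (\<sigma>' x) * H x = (if x \<in> Y then real (\<sigma>' x) else 0)"
    proof (cases "x \<in> Z")
      case True then show ?thesis using H_Z[OF True, of adj Y] H_def by simp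
    next
      case False then show ?thesis using fin0 by simp
    qed
  qed simp
  also have "\<dots> = (\<Sum>x\<in>UNIV \<inter> Y. real (\<sigma>' x))" using sum.inter_restrict[of UNIV "\<lambda>x. real (\<sigma>' x)" Y] by simp
  finally have lhs: "(\<Sum>x\<in>UNIV. real (\<sigma>' x) * H x) = real (\<Sum>y\<in>Y. \<sigma>' y)" by simp
  have eq: "real (\<Sum>y\<in>Y. \<sigma>' y) - H_walk adj Z s Y = (\<Sum>u\<in>UNIV - Z. Tsum nxt H \<rho>0 u (m u))"
    using ms lhs unfolding H_walk_def H_def by simp
  have bnd: "\<bar>Tsum nxt H \<rho>0 u (m u)\<bar> \<le> (\<Sum>v\<in>nbrs adj u. \<bar>H u - H v\<bar>)" if u: "u \<in> UNIV - Z" for u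
  proof -
    obtain z where z: "z \<in> Z" using Zne by blast
    have "adj\<^sup>*\<^sup>* u z" using conn unfolding finite_connected_graph_def by blast
    moreover have "u \<noteq> z" using u z by auto
    ultimately obtain y where "adj u y" by (metis converse_rtranclpE)
    then have ne: "nbrs adj u \<noteq> {}" by (auto simp: nbrs_def)
    then have r: "\<rho>0 u \<in> nbrs adj u" using rho0 by blast
    have b: "nxt u (\<rho>0 u) \<in> nbrs adj u" using cyc r unfolding cyclic_orders_def by blast
    have cpos: "real (card (nbrs adj u)) \<noteq> 0" using ne by simp
    have harm: "H u = (\<Sum>v\<in>nbrs adj u. H v) / real (card (nbrs adj u))"
      using H_harm[OF YZ, of u adj] u H_def by simp
    have g0: "(\<Sum>v\<in>nbrs adj u. H v - H u) = 0"
      using harm cpos by (simp add: sum_subtractf field_simps)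
    have "\<bar>\<Sum>i<m u. H ((nxt u ^^ i) (nxt u (\<rho>0 u))) - H u\<bar> \<le> (\<Sum>v\<in>nbrs adj u. \<bar>H v - H u\<bar>)"
      using partial_bound[OF cyc b, of "\<lambda>v. H v - H u" "m u"] g0 by simp
    then show ?thesis unfolding Tsum_def by (simp add: abs_minus_commute)
  qed
  have "\<bar>\<Sum>u\<in>UNIV - Z. Tsum nxt H \<rho>0 u (m u)\<bar> \<le> (\<Sum>u\<in>UNIV - Z. \<bar>Tsum nxt H \<rho>0 u (m u)\<bar>)"
    by (rule sum_abs)
  also have "\<dots> \<le> (\<Sum>u\<in>UNIV - Z. \<Sum>v\<in>nbrs adj u. \<bar>H u - H v\<bar>)"
    by (rule sum_mono) (rule bnd)
  finally show ?thesis using eq unfolding H_def by simp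
qed

end
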